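(* If an $n$-agent network is $k$-redundant, then for any subset $\mathcal S\subset\mathcal V$ with $|\mathcal S|\ge n-k$, $$\arg\min_x\sum_{i\in\mathcal S}\|A_ix-b_i\|_2^2=\mathcal X^*.$$
   Context: An $n$-agent network: agents $\mathcal V=\{1,\dots,n\}$, each agent $i$ having real matrices $A_i\in\mathbb R^{r_i\times d}$, $b_i\in\mathbb R^{r_i}$; $\mathcal X^*=\arg\min_x\sum_{i=1}^n\|A_ix-b_i\|_2^2$ (the set of least squares solutions of $Ax=b$, $A,b$ the stackings of the $A_i,b_i$). The network is $k$-redundant ($k\in\{0,1,\dots,n-1\}$) if for any $\mathcal S_1,\mathcal S_2\subset\mathcal V$ with $|\mathcal S_1|=|\mathcal S_2|=n-k$, $\arg\min_x\sum_{i\in\mathcal S_1}\|A_ix-b_i\|_2^2=\arg\min_x\sum_{i\in\mathcal S_2}\|A_ix-b_i\|_2^2$. *)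

theory Defs
  imports "Jordan_Normal_Form.Matrix"
begin

definition sq_residual :: "real mat \<Rightarrow> real vec \<Rightarrow> real vec \<Rightarrow> real" where
  "sq_residual M c x = (\<Sum>j<dim_vec (M *\<^sub>v x - c). ((M *\<^sub>v x - c) $ j)\<^sup>2)"

definition agg_cost :: "(nat \<Rightarrow> real mat) \<Rightarrow> (nat \<Rightarrow> real vec) \<Rightarrow> nat set \<Rightarrow> real vec \<Rightarrow> real" where
  "agg_cost A b S x = (\<Sum>i\<in>S. sq_residual (A i) (b i) x)"

definition argmin_vec :: "nat \<Rightarrow> (real vec \<Rightarrow> real) \<Rightarrow> real vec set" where
  "argmin_vec d f = {x \<in> carrier_vec d. \<forall>y \<in> carrier_vec d. f x \<le> f y}"

definition k_redundant :: "nat \<Rightarrow> nat \<Rightarrow> (nat \<Rightarrow> real mat) \<Rightarrow> (nat \<Rightarrow> real vec) \<Rightarrow> nat \<Rightarrow> bool" where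
  "k_redundant n d A b k \<longleftrightarrow>
     (\<forall>S1 S2. S1 \<subseteq> {1..n} \<longrightarrow> S2 \<subseteq> {1..n} \<longrightarrow> card S1 = n - k \<longrightarrow> card S2 = n - k \<longrightarrow>
        argmin_vec d (agg_cost A b S1) = argmin_vec d (agg_cost A b S2))"

end

theory Submission
  imports Defs
begin

definition lin :: "('r \<Rightarrow> nat \<Rightarrow> real) \<Rightarrow> nat \<Rightarrow> (nat \<Rightarrow> real) \<Rightarrow> 'r \<Rightarrow> real" where
  "lin a d x i = (\<Sum>j<d. a i j * x j)"

definition RS :: "('r \<Rightarrow> nat \<Rightarrow> real) \<Rightarrow> ('r \<Rightarrow> real) \<Rightarrow> nat \<Rightarrow> 'r set \<Rightarrow> (nat \<Rightarrow> real) \<Rightarrow> real" where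
  "RS a c d I x = (\<Sum>i\<in>I. (lin a d x i - c i)^2)"

lemma lin_add: "lin a d (\<lambda>j. x j + t * y j) i = lin a d x i + t * lin a d y i"
  by (simp add: lin_def sum.distrib sum_distrib_left algebra_simps)

lemma lin_Suc: "lin a (Suc d) x i = lin a d x i + a i d * x d"
  by (simp add: lin_def)

lemma lin_cong: "(\<And>j. j < d \<Longrightarrow> x j = y j) \<Longrightarrow> lin a d x i = lin a d y i"
  by (simp add: lin_def)

lemma RS_cong: "(\<And>j. j < d \<Longrightarrow> x j = y j) \<Longrightarrow> RS a c d I x = RS a c d I y"
  unfolding RS_def using lin_cong[of d x y a] by simp

lemma orth:
  assumes min: "\<And>y. RS a c d I x \<le> RS a c d I y"
  shows "(\<Sum>i\<in>I. (lin a d x i - c i) * lin a d y i) = 0"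
proof (rule ccontr)
  define Sx where "Sx = (\<Sum>i\<in>I. (lin a d x i - c i) * lin a d y i)"
  define Q where "Q = (\<Sum>i\<in>I. (lin a d y i)^2)"
  assume "(\<Sum>i\<in>I. (lin a d x i - c i) * lin a d y i) \<noteq> 0"
  hence S0: "Sx \<noteq> 0" by (simp add: Sx_def)
  have Q0: "Q \<ge> 0" unfolding Q_def by (simp add: sum_nonneg)
  have exp: "RS a c d I (\<lambda>j. x j + t * y j) = RS a c d I x + 2*t*Sx + t^2*Q" for t
  proof -
    have "RS a c d I (\<lambda>j. x j + t * y j) =
      (\<Sum>i\<in>I. (lin a d x i - c i)^2 + 2*t*((lin a d x i - c i) * lin a d y i) + t^2 * (lin a d y i)^2)"
      unfolding RS_def lin_add by (rule sum.cong) (simp_all add: power2_eq_square algebra_simps)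
    also have "\<dots> = RS a c d I x + 2*t*Sx + t^2*Q"
      by (simp add: RS_def Sx_def Q_def sum.distrib sum_distrib_left)
    finally show ?thesis .
  qed
  define t where "t = - Sx / (Q + 1)"
  have "RS a c d I x \<le> RS a c d I x + 2*t*Sx + t^2*Q" using min exp by metis
  hence h: "0 \<le> 2*t*Sx + t^2*Q" by simp
  have "(2*t*Sx + t^2*Q) * (Q+1)^2 = - (Sx^2 * (Q + 2))"
  proof -
    have tq: "t * (Q + 1) = - Sx" unfolding t_def using Q0 by (simp add: field_simps)
    have "(2*t*Sx + t^2*Q) * (Q+1)^2 = 2*Sx*(t*(Q+1))*(Q+1) + Q*(t*(Q+1))^2"
      by (simp add: power2_eq_square algebra_simps)
    also have "\<dots> = - (Sx^2 * (Q + 2))" unfolding tq by (simp add: power2_eq_square algebra_simps)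
    finally show ?thesis .
  qed
  moreover have "Sx^2 * (Q+2) > 0" using S0 Q0 by (simp add: add_nonneg_pos)
  moreover have "(2*t*Sx + t^2*Q) * (Q+1)^2 \<ge> 0" using h by simp
  ultimately show False by linarith
qed

lemma exists_min:
  assumes fin: "finite I"
  shows "\<exists>x. \<forall>y. RS a c d I x \<le> RS a c d I y"
proof (induction d arbitrary: c)
  case 0
  show ?case by (simp add: RS_def lin_def)
next
  case (Suc d)
  obtain xb where xb: "\<And>y. RS a c d I xb \<le> RS a c d I y" using Suc by blast
  obtain xa where xa: "\<And>y. RS a (\<lambda>i. a i d) d I xa \<le> RS a (\<lambda>i. a i d) d I y" using Suc by blast
  define w where "w i = a i d - lin a d xa i" for i
  define r where "r i = c i - lin a d xb i" for i
  define W where "W = (\<Sum>i\<in>I. (w i)^2)"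
  define P where "P = (\<Sum>i\<in>I. r i * w i)"
  define R0 where "R0 = (\<Sum>i\<in>I. (r i)^2)"
  define t0 where "t0 = P / W"
  define x where "x j = (if j = d then t0 else xb j + (- t0) * xa j)" for j
  have ow: "(\<Sum>i\<in>I. w i * lin a d z i) = 0" for z
  proof -
    have "(\<Sum>i\<in>I. (lin a d xa i - a i d) * lin a d z i) = 0" using orth[OF xa] .
    hence "- (\<Sum>i\<in>I. (lin a d xa i - a i d) * lin a d z i) = 0" by simp
    thus ?thesis unfolding sum_negf[symmetric] w_def by (simp add: algebra_simps)
  qed
  have or: "(\<Sum>i\<in>I. r i * lin a d z i) = 0" for z
  proof -
    have "(\<Sum>i\<in>I. (lin a d xb i - c i) * lin a d z i) = 0" using orth[OF xb] .
    hence "- (\<Sum>i\<in>I. (lin a d xb i - c i) * lin a d z i) = 0" by simp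
    thus ?thesis unfolding sum_negf[symmetric] r_def by (simp add: algebra_simps)
  qed
  have f1: "lin a (Suc d) x i - c i = t0 * w i - r i" for i
  proof -
    have "lin a d x i = lin a d (\<lambda>j. xb j + (- t0) * xa j) i"
      by (rule lin_cong) (simp add: x_def)
    thus ?thesis unfolding lin_Suc lin_add w_def r_def by (simp add: x_def algebra_simps)
  qed
  have Rx: "RS a c (Suc d) I x = t0^2 * W - 2 * t0 * P + R0"
  proof -
    have "RS a c (Suc d) I x = (\<Sum>i\<in>I. t0^2 * (w i)^2 - 2 * t0 * (r i * w i) + (r i)^2)"
      unfolding RS_def f1 by (rule sum.cong) (simp_all add: power2_eq_square algebra_simps)
    thus ?thesis by (simp add: W_def P_def R0_def sum.distrib sum_subtractf sum_distrib_left)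
  qed
  have key: "t0^2 * W - 2 * t0 * P \<le> s^2 * W - 2 * s * P" for s
  proof (cases "W = 0")
    case True
    hence "\<forall>i\<in>I. (w i)^2 = 0" unfolding W_def using sum_nonneg_eq_0_iff[OF fin, of "\<lambda>i. (w i)^2"] by simp
    hence "P = 0" unfolding P_def by simp
    thus ?thesis using True by simp
  next
    case False
    have Wp: "W > 0" using False unfolding W_def by (simp add: sum_nonneg order_le_neq_trans)
    have "s^2 * W - 2 * s * P - (t0^2 * W - 2 * t0 * P) = (s * W - P)^2 / W"
      unfolding t0_def using Wp by (simp add: field_simps power2_eq_square)
    moreover have "(s * W - P)^2 / W \<ge> 0" using Wp by simp
    ultimately show ?thesis by linarith
  qed
  show ?case
  proof (intro exI allI)
    fix y :: "nat \<Rightarrow> real"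
    define s where "s = y d"
    define z where "z j = (y j - xb j) + s * xa j" for j
    define u where "u i = lin a d z i" for i
    have lz: "lin a d z i = lin a d y i - lin a d xb i + s * lin a d xa i" for i
      by (simp add: z_def lin_def sum.distrib sum_subtractf sum_distrib_left algebra_simps)
    have f2: "lin a (Suc d) y i - c i = u i + (s * w i - r i)" for i
      unfolding lin_Suc u_def lz w_def r_def s_def by (simp add: algebra_simps)
    have "RS a c (Suc d) I y = (\<Sum>i\<in>I. (u i)^2 + 2 * s * (w i * u i) - 2 * (r i * u i)
        + (s^2 * (w i)^2 - 2 * s * (r i * w i) + (r i)^2))"
      unfolding RS_def f2 by (rule sum.cong) (simp_all add: power2_eq_square algebra_simps)
    also have "\<dots> = (\<Sum>i\<in>I. (u i)^2) + 2 * s * (\<Sum>i\<in>I. w i * u i) - 2 * (\<Sum>i\<in>I. r i * u i)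
        + (s^2 * W - 2 * s * P + R0)"
      by (simp add: W_def P_def R0_def sum.distrib sum_subtractf sum_distrib_left)
    also have "\<dots> = (\<Sum>i\<in>I. (u i)^2) + (s^2 * W - 2 * s * P + R0)"
      using ow[of z] or[of z] unfolding u_def by simp
    finally have "RS a c (Suc d) I y = (\<Sum>i\<in>I. (u i)^2) + (s^2 * W - 2 * s * P + R0)" .
    moreover have "(\<Sum>i\<in>I. (u i)^2) \<ge> 0" by (simp add: sum_nonneg)
    ultimately show "RS a c (Suc d) I x \<le> RS a c (Suc d) I y" using Rx key[of s] by linarith
  qed
qed


lemma sq_res_eq:
  assumes M: "M \<in> carrier_mat (dim_vec c) d" and x: "x \<in> carrier_vec d"
  shows "sq_residual M c x = (\<Sum>r<dim_vec c. ((\<Sum>j<d. M$$(r,j) * x$j) - c$r)^2)"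
  unfolding sq_residual_def
proof (rule sum.cong)
  show "{..<dim_vec (M *\<^sub>v x - c)} = {..<dim_vec c}" by simp
next
  fix r assume "r \<in> {..<dim_vec c}"
  hence r: "r < dim_vec c" by simp
  have "(M *\<^sub>v x - c) $ r = (M *\<^sub>v x) $ r - c $ r" using r by simp
  also have "(M *\<^sub>v x) $ r = (\<Sum>j<d. M$$(r,j) * x$j)"
    using M x r by (simp add: scalar_prod_def atLeast0LessThan)
  finally show "((M *\<^sub>v x - c) $ r)^2 = ((\<Sum>j<d. M$$(r,j) * x$j) - c$r)^2" by simp
qed

lemma agg_eq:
  assumes dims: "\<And>i. i \<in> {1..n} \<Longrightarrow> A i \<in> carrier_mat (dim_vec (b i)) d"
    and S: "S \<subseteq> {1..n}" and x: "x \<in> carrier_vec d"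
  shows "agg_cost A b S x = RS (\<lambda>(i,r) j. A i $$ (r,j)) (\<lambda>(i,r). b i $ r) d
           (Sigma S (\<lambda>i. {..<dim_vec (b i)})) (\<lambda>j. x$j)"
proof -
  have fin: "finite S" using S finite_subset by blast
  have "agg_cost A b S x = (\<Sum>i\<in>S. \<Sum>r<dim_vec (b i). ((\<Sum>j<d. A i $$(r,j) * x$j) - b i $r)^2)"
    unfolding agg_cost_def using sq_res_eq[OF dims x] S by (intro sum.cong) auto
  also have "\<dots> = RS (\<lambda>(i,r) j. A i $$ (r,j)) (\<lambda>(i,r). b i $ r) d
           (Sigma S (\<lambda>i. {..<dim_vec (b i)})) (\<lambda>j. x$j)"
    unfolding RS_def lin_def using fin by (subst sum.Sigma) (auto simp: case_prod_beta)
  finally show ?thesis .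
qed

lemma agg_exists:
  assumes dims: "\<And>i. i \<in> {1..n} \<Longrightarrow> A i \<in> carrier_mat (dim_vec (b i)) d"
    and S: "S \<subseteq> {1..n}"
  shows "\<exists>x. x \<in> argmin_vec d (agg_cost A b S)"
proof -
  have fin: "finite S" using S finite_subset by blast
  let ?a = "(\<lambda>(i,r) j. A i $$ (r,j)) :: nat \<times> nat \<Rightarrow> nat \<Rightarrow> real"
  let ?c = "(\<lambda>(i,r). b i $ r) :: nat \<times> nat \<Rightarrow> real"
  let ?I = "Sigma S (\<lambda>i. {..<dim_vec (b i)})"
  have "finite ?I" using fin by auto
  then obtain x0 where x0: "\<And>y. RS ?a ?c d ?I x0 \<le> RS ?a ?c d ?I y" using exists_min by blast
  have "vec d x0 \<in> argmin_vec d (agg_cost A b S)"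
    unfolding argmin_vec_def
  proof (intro CollectI conjI ballI)
    show "vec d x0 \<in> carrier_vec d" by simp
    fix y :: "real vec" assume y: "y \<in> carrier_vec d"
    have vc: "vec d x0 \<in> carrier_vec d" by simp
    have "agg_cost A b S (vec d x0) = RS ?a ?c d ?I (\<lambda>j. vec d x0 $ j)"
      by (rule agg_eq[OF dims S vc])
    also have "\<dots> = RS ?a ?c d ?I x0" by (rule RS_cong) simp
    also have "\<dots> \<le> RS ?a ?c d ?I (\<lambda>j. y$j)" by (rule x0)
    also have "\<dots> = agg_cost A b S y" using agg_eq[OF dims S y] by simp
    finally show "agg_cost A b S (vec d x0) \<le> agg_cost A b S y" .
  qed
  thus ?thesis by blast
qed

lemma sum_remove_identity:
  assumes fin: "finite S"
  shows "(\<Sum>j\<in>S. agg_cost A b (S - {j}) x) = (real (card S) - 1) * agg_cost A b S x"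
proof -
  have "(\<Sum>j\<in>S. agg_cost A b (S - {j}) x) = (\<Sum>j\<in>S. agg_cost A b S x - sq_residual (A j) (b j) x)"
    unfolding agg_cost_def using fin by (intro sum.cong) (auto simp: sum_diff1)
  also have "\<dots> = real (card S) * agg_cost A b S x - agg_cost A b S x"
    by (simp add: sum_subtractf agg_cost_def)
  finally show ?thesis by (simp add: algebra_simps)
qed

theorem corollary1:
  fixes n d k :: nat and A :: "nat \<Rightarrow> real mat" and b :: "nat \<Rightarrow> real vec" and S :: "nat set"
  assumes dims: "\<And>i. i \<in> {1..n} \<Longrightarrow> A i \<in> carrier_mat (dim_vec (b i)) d"
    and k_range: "k < n"
    and red: "k_redundant n d A b k"
    and S_sub: "S \<subseteq> {1..n}"
    and S_card: "card S \<ge> n - k"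
  shows "argmin_vec d (agg_cost A b S) = argmin_vec d (agg_cost A b {1..n})"
proof -
  define F where "F T = agg_cost A b T" for T
  define AM where "AM T = argmin_vec d (F T)" for T
  obtain T0 where T0: "T0 \<subseteq> {1..n}" "card T0 = n - k"
    using obtain_subset_with_card_n[of "n - k" "{1..n::nat}"] by auto
  define X where "X = AM T0"
  have "\<exists>x. x \<in> argmin_vec d (agg_cost A b T0)"
    by (rule agg_exists[where A=A and b=b and n=n]) (use dims T0 in \<open>blast+\<close>)
  then obtain x0 where x0: "x0 \<in> X" unfolding X_def AM_def F_def by blast
  have claim: "\<forall>S. S \<subseteq> {1..n} \<longrightarrow> card S = n - k + m \<longrightarrow> AM S = X" for m
  proof (induction m)
    case 0
    show ?case
    proof (intro allI impI)
      fix S assume "S \<subseteq> {1..n}" "card S = n - k + 0"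
      thus "AM S = X" using red T0 unfolding k_redundant_def X_def AM_def F_def
        by (metis add_0_right)
    qed
  next
    case (Suc m)
    show ?case
    proof (intro allI impI)
      fix S assume S: "S \<subseteq> {1..n}" and cS: "card S = n - k + Suc m"
      have fin: "finite S" using S finite_subset by blast
      have Sj: "AM (S - {j}) = X" if "j \<in> S" for j
      proof -
        have "S - {j} \<subseteq> {1..n}" using S by blast
        moreover have "card (S - {j}) = n - k + m" using cS that fin by (simp add: card_Diff_singleton)
        ultimately show ?thesis using Suc.IH by blast
      qed
      define c where "c = real (card S) - 1"
      have cpos: "c > 0" unfolding c_def using cS k_range by simp
      have sid: "(\<Sum>j\<in>S. F (S - {j}) x) = c * F S x" for x
        unfolding F_def c_def by (rule sum_remove_identity[OF fin])
      have Xmin: "F (S - {j}) x \<le> F (S - {j}) y" if "x \<in> X" "j \<in> S" "y \<in> carrier_vec d" for x y j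
        using Sj[OF that(2)] that(1,3) unfolding AM_def argmin_vec_def by auto
      have Xcar: "x \<in> carrier_vec d" if "x \<in> X" for x
        using that unfolding X_def AM_def argmin_vec_def by auto
      show "AM S = X"
      proof
        show "X \<subseteq> AM S"
        proof
          fix x assume x: "x \<in> X"
          have "F S x \<le> F S y" if y: "y \<in> carrier_vec d" for y
          proof -
            have "(\<Sum>j\<in>S. F (S - {j}) x) \<le> (\<Sum>j\<in>S. F (S - {j}) y)"
              by (rule sum_mono) (rule Xmin[OF x _ y])
            hence "c * F S x \<le> c * F S y" unfolding sid .
            thus ?thesis using cpos by simp
          qed
          thus "x \<in> AM S" using Xcar[OF x] unfolding AM_def argmin_vec_def by auto
        qed
      next
        show "AM S \<subseteq> X"
        proof
          fix y assume y: "y \<in> AM S"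
          have yc: "y \<in> carrier_vec d" and ymin: "F S y \<le> F S x0"
            using y Xcar[OF x0] unfolding AM_def argmin_vec_def by auto
          have "S \<noteq> {}" using cS k_range by auto
          then obtain j where j: "j \<in> S" by blast
          have le: "F (S - {i}) x0 \<le> F (S - {i}) y" if "i \<in> S" for i
            using Xmin[OF x0 that yc] .
          have eq: "F (S - {j}) y = F (S - {j}) x0"
          proof (rule ccontr)
            assume "F (S - {j}) y \<noteq> F (S - {j}) x0"
            hence "F (S - {j}) x0 < F (S - {j}) y" using le[OF j] by simp
            hence "(\<Sum>i\<in>S. F (S - {i}) x0) < (\<Sum>i\<in>S. F (S - {i}) y)"
              using fin le j by (intro sum_strict_mono_ex1) auto
            hence "c * F S x0 < c * F S y" unfolding sid .
            hence "F S x0 < F S y" using cpos by (simp add: mult_less_cancel_left)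
            thus False using ymin by simp
          qed
          have "y \<in> AM (S - {j})"
            unfolding AM_def argmin_vec_def
          proof (intro CollectI conjI ballI)
            show "y \<in> carrier_vec d" by (rule yc)
            fix z :: "real vec" assume z: "z \<in> carrier_vec d"
            show "F (S - {j}) y \<le> F (S - {j}) z" using eq Xmin[OF x0 j z] by simp
          qed
          thus "y \<in> X" using Sj[OF j] by simp
        qed
      qed
    qed
  qed
  have fS: "finite S" using S_sub finite_subset by blast
  have "AM S = X" using claim[of "card S - (n - k)"] S_sub S_card by auto
  moreover have "AM {1..n} = X" using claim[of "n - (n - k)"] k_range by auto
  ultimately show ?thesis unfolding AM_def F_def by simp
qed

end
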